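(* Let $\vartheta\in\{p,bp,r\}$. Neither of the spaces $\mathcal{H}_{\vartheta}$ and $\mathcal{L}_u$ is contained in the other; that is, $\mathcal{H}_{\vartheta}\setminus\mathcal{L}_u\neq\emptyset$ and $\mathcal{L}_u\setminus\mathcal{H}_{\vartheta}\neq\emptyset$.
   Context: $\Omega$ denotes the set of all complex double sequences $x=(x_{kl})_{k,l\ge 1}$. A double sequence is $p$-convergent (Pringsheim convergent) to $L$ if for every $\varepsilon>0$ there is $N$ with $|x_{kl}-L|<\varepsilon$ for all $k,l\ge N$; $bp$-convergent if bounded and $p$-convergent; $r$-convergent (regularly convergent) if $p$-convergent and every row and every column converges. For $\vartheta\in\{p,bp,r\}$, $\mathcal{C}_{\vartheta 0}$ is the set of double sequences $\vartheta$-convergent to $0$. $\Delta x_{kl}=x_{kl}-x_{k+1,l}-x_{k,l+1}+x_{k+1,l+1}$, and $\mathcal{H}_{\vartheta}=\{x\in\Omega:\sum_{k,l=1}^{\infty}|kl\,\Delta x_{kl}|<\infty\}\cap\mathcal{C}_{\vartheta 0}$. $\mathcal{L}_u=\{x\in\Omega:\sum_{k,l=1}^{\infty}|x_{kl}|<\infty\}$ is the space of absolutely summable double sequences. *)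

theory Defs
  imports "HOL-Analysis.Analysis"
begin

text \<open>Double sequences x = (x_kl)_{k,l>=1} are modelled as functions nat => nat => complex;
  only the values at indices k,l >= 1 are relevant.\<close>

type_synonym dseq = "nat \<Rightarrow> nat \<Rightarrow> complex"

definition p_conv :: "dseq \<Rightarrow> complex \<Rightarrow> bool" where
  "p_conv x L \<longleftrightarrow> (\<forall>\<epsilon>>0. \<exists>N. \<forall>k\<ge>N. \<forall>l\<ge>N. cmod (x k l - L) < \<epsilon>)"

definition dbounded :: "dseq \<Rightarrow> bool" where
  "dbounded x \<longleftrightarrow> (\<exists>B. \<forall>k\<ge>1. \<forall>l\<ge>1. cmod (x k l) \<le> B)"

definition bp_conv :: "dseq \<Rightarrow> complex \<Rightarrow> bool" where
  "bp_conv x L \<longleftrightarrow> dbounded x \<and> p_conv x L"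

definition r_conv :: "dseq \<Rightarrow> complex \<Rightarrow> bool" where
  "r_conv x L \<longleftrightarrow> p_conv x L \<and> (\<forall>k\<ge>1. convergent (\<lambda>l. x k l))
                               \<and> (\<forall>l\<ge>1. convergent (\<lambda>k. x k l))"

datatype conv_mode = P | BP | R

fun conv_to :: "conv_mode \<Rightarrow> dseq \<Rightarrow> complex \<Rightarrow> bool" where
  "conv_to P x L = p_conv x L"
| "conv_to BP x L = bp_conv x L"
| "conv_to R x L = r_conv x L"

definition C0 :: "conv_mode \<Rightarrow> dseq set" where
  "C0 \<theta> = {x. conv_to \<theta> x 0}"

definition Delta :: "dseq \<Rightarrow> nat \<Rightarrow> nat \<Rightarrow> complex" where
  "Delta x k l = x k l - x (Suc k) l - x k (Suc l) + x (Suc k) (Suc l)"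

definition H_space :: "conv_mode \<Rightarrow> dseq set" where
  "H_space \<theta> = {x. (\<lambda>(k,l). cmod (of_nat (k*l) * Delta x k l)) summable_on ({1..} \<times> {1..})} \<inter> C0 \<theta>"

definition L_u :: "dseq set" where
  "L_u = {x. (\<lambda>(k,l). cmod (x k l)) summable_on ({1..} \<times> {1..})}"

end

theory Submission
  imports Defs
begin

lemma not_summable_lemma:
  fixes f :: "'a \<Rightarrow> real" and g :: "nat \<Rightarrow> 'a"
  assumes nn: "\<And>x. x \<in> A \<Longrightarrow> f x \<ge> 0" and inj: "inj g"
    and gA: "\<And>n. g n \<in> A" and ge: "\<And>n. f (g n) \<ge> 1"
  shows "\<not> f summable_on A"
proof
  assume s: "f summable_on A"
  obtain n :: nat where n: "real n > infsum f A" using reals_Archimedean2 by blast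
  have "sum f (g ` {..<n}) \<le> infsum f A"
    by (rule finite_sum_le_infsum[OF s]) (use gA nn in auto)
  moreover have "sum f (g ` {..<n}) = (\<Sum>i<n. f (g i))"
    using inj by (simp add: sum.reindex inj_on_def inj_def)
  moreover have "(\<Sum>i<n. f (g i)) \<ge> (\<Sum>i<n. 1)"
    by (rule sum_mono) (use ge in auto)
  ultimately show False using n by simp
qed

definition ex1 :: dseq where "ex1 k l = (if k = 1 then 1 else 0)"
definition ex2 :: dseq where "ex2 k l = (if k = l then inverse (of_nat k ^ 2) else 0)"

lemma ex1_C0: "ex1 \<in> C0 \<theta>"
proof -
  have p: "p_conv ex1 0" unfolding p_conv_def ex1_def
    by (intro allI impI exI[of _ 2]) auto
  have b: "dbounded ex1" unfolding dbounded_def ex1_def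
    by (intro exI[of _ 1]) auto
  have r1: "convergent (\<lambda>l. ex1 k l)" for k
    unfolding ex1_def by (auto intro: convergent_const)
  have r2: "convergent (\<lambda>k. ex1 k l)" for l
  proof -
    have "(\<lambda>k. ex1 k l) \<longlonglongrightarrow> 0"
      unfolding ex1_def
      by (rule tendsto_eventually) (auto simp: eventually_at_top_linorder intro!: exI[of _ 2])
    then show ?thesis by (auto simp: convergent_def)
  qed
  show ?thesis using p b r1 r2
    by (cases \<theta>) (auto simp: C0_def bp_conv_def r_conv_def)
qed

lemma ex1_H: "ex1 \<in> H_space \<theta>"
proof -
  have "(\<lambda>(k,l). cmod (of_nat (k*l) * Delta ex1 k l)) summable_on ({1..} \<times> {1..})"
    by (rule summable_on_0) (auto simp: Delta_def ex1_def)
  then show ?thesis using ex1_C0 by (simp add: H_space_def)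
qed

lemma ex1_notL: "ex1 \<notin> L_u"
proof -
  have "\<not> (\<lambda>(k,l). cmod (ex1 k l)) summable_on ({1..} \<times> {1..})"
    by (rule not_summable_lemma[where g = "\<lambda>n. (1, Suc n)"])
       (auto simp: ex1_def inj_def)
  then show ?thesis by (simp add: L_u_def)
qed

lemma ex2_C0: "ex2 \<in> C0 \<theta>"
proof -
  have p: "p_conv ex2 0" unfolding p_conv_def
  proof (intro allI impI)
    fix e :: real assume e: "e > 0"
    obtain N :: nat where N: "inverse (real N) < e" "N > 0"
      using reals_Archimedean[OF e] by (metis zero_less_Suc)
    show "\<exists>N. \<forall>k\<ge>N. \<forall>l\<ge>N. cmod (ex2 k l - 0) < e"
    proof (intro exI[of _ N] allI impI)
      fix k l assume k: "k \<ge> N" and l: "l \<ge> N"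
      have "cmod (ex2 k l) \<le> inverse (real k ^ 2)"
        by (auto simp: ex2_def norm_inverse norm_power)
      also have "\<dots> \<le> inverse (real k)"
        using k N by (auto simp: field_simps power2_eq_square)
      also have "\<dots> \<le> inverse (real N)"
        using k N by (auto simp: field_simps)
      finally show "cmod (ex2 k l - 0) < e" using N by simp
    qed
  qed
  have b: "dbounded ex2" unfolding dbounded_def
  proof (intro exI[of _ 1] allI impI)
    fix k l :: nat assume "k \<ge> 1" "l \<ge> 1"
    then have "real k ^ 2 \<ge> 1" by simp
    then have "inverse (real k ^ 2) \<le> 1" by (simp add: inverse_le_1_iff)
    then show "cmod (ex2 k l) \<le> 1"
      by (auto simp: ex2_def norm_inverse norm_power)
  qed
  have ev: "(\<lambda>n. if n = m then c else (0::complex)) \<longlonglongrightarrow> 0" for m c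
    by (rule tendsto_eventually, rule eventually_sequentiallyI[of "Suc m"]) auto
  have ev2: "(\<lambda>n. if m = n then c else (0::complex)) \<longlonglongrightarrow> 0" for m c
    by (rule tendsto_eventually, rule eventually_sequentiallyI[of "Suc m"]) auto
  have r1: "convergent (\<lambda>l. ex2 k l)" for k
    using ev2[of k "inverse (of_nat k ^ 2)"] unfolding ex2_def convergent_def
    by (metis (no_types, lifting) ext)
  have r2: "convergent (\<lambda>k. ex2 k l)" for l
  proof -
    have "(\<lambda>k. ex2 k l) = (\<lambda>n. if n = l then inverse (of_nat l ^ 2) else 0)"
      by (auto simp: ex2_def)
    then show ?thesis using ev[of l "inverse (of_nat l ^ 2)"] unfolding convergent_def by auto
  qed
  show ?thesis using p b r1 r2
    by (cases \<theta>) (auto simp: C0_def bp_conv_def r_conv_def)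
qed

lemma ex2_L: "ex2 \<in> L_u"
proof -
  let ?h = "\<lambda>k::nat. (k, k)"
  have s0: "(\<lambda>k::nat. inverse (real k ^ 2)) summable_on UNIV"
    by (subst summable_on_UNIV_nonneg_real_iff) (auto intro: inverse_power_summable)
  have s1: "(\<lambda>k::nat. inverse (real k ^ 2)) summable_on {1..}"
    by (rule summable_on_subset[OF s0]) auto
  have "((\<lambda>(k,l). cmod (ex2 k l)) \<circ> ?h) summable_on {1..}"
    using s1 by (simp add: o_def ex2_def norm_inverse norm_power)
  then have "(\<lambda>(k,l). cmod (ex2 k l)) summable_on (?h ` {1..})"
    by (subst summable_on_reindex) (auto simp: inj_on_def)
  moreover have "(\<lambda>(k,l). cmod (ex2 k l)) summable_on (?h ` {1..}) \<longleftrightarrow>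
       (\<lambda>(k,l). cmod (ex2 k l)) summable_on ({1..} \<times> {1..})"
    by (rule summable_on_cong_neutral) (auto simp: ex2_def image_iff)
  ultimately show ?thesis by (simp add: L_u_def)
qed

lemma ex2_notH: "ex2 \<notin> H_space \<theta>"
proof -
  have "\<not> (\<lambda>(k,l). cmod (of_nat (k*l) * Delta ex2 k l)) summable_on ({1..} \<times> {1..})"
  proof (rule not_summable_lemma[where g = "\<lambda>n. (Suc n, Suc n)"])
    fix n :: nat
    let ?k = "real (Suc n)"
    have "cmod (of_nat (Suc n * Suc n) * Delta ex2 (Suc n) (Suc n))
        = ?k * ?k * (inverse (?k ^ 2) + inverse (real (Suc (Suc n)) ^ 2))"
    proof -
      have "Delta ex2 (Suc n) (Suc n) = of_real (inverse (?k ^ 2) + inverse (real (Suc (Suc n)) ^ 2))"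
        by (simp add: Delta_def ex2_def)
      then have "of_nat (Suc n * Suc n) * Delta ex2 (Suc n) (Suc n)
          = of_real (?k * ?k * (inverse (?k ^ 2) + inverse (real (Suc (Suc n)) ^ 2)))"
        by (simp add: ring_distribs)
      then show ?thesis
        by (simp only: norm_of_real) (simp del: of_nat_Suc)
    qed
    also have "\<dots> \<ge> ?k * ?k * inverse (?k ^ 2)"
      by (intro mult_left_mono) auto
    also have "?k * ?k * inverse (?k ^ 2) = 1"
      by (simp add: power2_eq_square field_simps del: of_nat_Suc)
    finally show "(case (Suc n, Suc n) of (k, l) \<Rightarrow> cmod (of_nat (k * l) * Delta ex2 k l)) \<ge> 1"
      by (simp only: case_prod_conv)
  qed (auto simp: inj_def)
  then show ?thesis by (simp add: H_space_def)
qed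

theorem theorem2p4:
  fixes \<theta> :: conv_mode
  shows "H_space \<theta> - L_u \<noteq> {} \<and> L_u - H_space \<theta> \<noteq> {}"
  using ex1_H ex1_notL ex2_L ex2_notH by blast

end
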